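(* Consider the car-following system with state $x=(D,v,v_{\rm L})\in\mathbb{R}^3$: $$\dot D = v_{\rm L}-v,\qquad \dot v = u - p(v),\qquad \dot v_{\rm L} = a_{\rm L}.$$ Here $p$ is locally Lipschitz with $p(v)\ge0$, and $a_{\rm L}$ is the leader's acceleration, a given exogenous input. The system is driven by the connected cruise controller $$u=k_{\rm d}(x)=A\big(V(D)-v\big)+B\big(W(v_{\rm L})-v\big)+Ca_{\rm L}$$ with $A,B,C\ge 0$, where $$V(D)=\min\{\kappa(D-D_{\rm st}),v_{\rm max}\}, \qquad W(v_{\rm L})=\min\{v_{\rm L},v_{\rm max}\}.$$ The constants satisfy $\kappa>0$, $v_{\rm max}>0$ and $D_{\rm st}\in\mathbb{R}$. Let $D_{\rm sf}\in\mathbb{R}$ and $T_{\rm c}>0$, and set $\bar\kappa=1/T_{\rm c}$. Define $$\mathcal{S}_{\rm D}=\{x: D-D_{\rm sf}\ge0\},\qquad \mathcal{S}_{\rm TTC}=\{x:\bar\kappa(D-D_{\rm sf})+v_{\rm L}-v\ge 0\}.$$ Assume the following: - there is a class-$\mathcal{K}$ function $\gamma$ such that $a_{\rm L}(t)\ge-\gamma(v_{\rm L}(t))$ along the solution; - there is $\bar v\ge0$ such that $v(t),v_{\rm L}(t)\in[0,\bar v]$ along the solution; - $D_{\rm st}>D_{\rm sf}$, $\bar\kappa\ge\kappa$ and $C\le 1$; - the gains satisfy $$A\kappa(D_{\rm st}-D_{\rm sf})+\min\{0,B-\bar\kappa\}\,\bar v+\min_{v_{\rm L}\in[0,\bar v]}\Big[(\bar\kappa-B+A)v_{\rm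 L}-(1-C)\gamma(v_{\rm L})\Big]\ \ge\ 0.$$ Then the closed loop is safe with respect to $\mathcal{S}_{\rm D}\cap\mathcal{S}_{\rm TTC}$: every such solution with $x(0)\in\mathcal{S}_{\rm D}\cap\mathcal{S}_{\rm TTC}$ satisfies $x(t)\in\mathcal{S}_{\rm D}\cap\mathcal{S}_{\rm TTC}$ for all $t\ge 0$.
   Context: A function $\gamma:[0,\infty)\to[0,\infty)$ is of class $\mathcal{K}$ if it is continuous, strictly increasing, and satisfies $\gamma(0)=0$. Standing assumption: solutions of the closed loop system exist and are unique for all $t\ge0$. *)

theory Defs
  imports "HOL-Analysis.Analysis"
begin

definition class_K :: "(real \<Rightarrow> real) \<Rightarrow> bool" where
  "class_K \<gamma> \<longleftrightarrow> continuous_on {0..} \<gamma> \<and> strict_mono_on {0..} \<gamma> \<and> \<gamma> 0 = 0"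

definition locally_lipschitz :: "(real \<Rightarrow> real) \<Rightarrow> bool" where
  "locally_lipschitz p \<longleftrightarrow> (\<forall>x. \<exists>e>0. \<exists>L. L-lipschitz_on (ball x e) p)"

definition Vfun :: "real \<Rightarrow> real \<Rightarrow> real \<Rightarrow> real \<Rightarrow> real" where
  "Vfun \<kappa> Dst vmax D = min (\<kappa> * (D - Dst)) vmax"

definition Wfun :: "real \<Rightarrow> real \<Rightarrow> real" where
  "Wfun vmax vL = min vL vmax"

definition kd :: "real \<Rightarrow> real \<Rightarrow> real \<Rightarrow> real \<Rightarrow> real \<Rightarrow> real \<Rightarrow> real
                  \<Rightarrow> real \<Rightarrow> real \<Rightarrow> real \<Rightarrow> real" where
  "kd A B C \<kappa> Dst vmax D v vL aL =
     A * (Vfun \<kappa> Dst vmax D - v) + B * (Wfun vmax vL - v) + C * aL"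

definition S_D :: "real \<Rightarrow> real \<times> real \<times> real \<Rightarrow> bool" where
  "S_D Dsf x = (case x of (D, v, vL) \<Rightarrow> D - Dsf \<ge> 0)"

definition S_TTC :: "real \<Rightarrow> real \<Rightarrow> real \<times> real \<times> real \<Rightarrow> bool" where
  "S_TTC kbar Dsf x = (case x of (D, v, vL) \<Rightarrow> kbar * (D - Dsf) + vL - v \<ge> 0)"

end

theory Submission
  imports Defs
begin
lemma coop:
  fixes a b a' b' :: "real \<Rightarrow> real" and qa qb qc qd :: real
  assumes da: "\<And>t. t \<ge> 0 \<Longrightarrow> (a has_real_derivative a' t) (at t within {0..})"
    and db: "\<And>t. t \<ge> 0 \<Longrightarrow> (b has_real_derivative b' t) (at t within {0..})"
    and ia: "\<And>t. t \<ge> 0 \<Longrightarrow> a' t \<ge> qa * a t + qb * b t"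
    and ib: "\<And>t. t \<ge> 0 \<Longrightarrow> b' t \<ge> qc * a t + qd * b t"
    and cn: "qa \<ge> 0" "qb \<ge> 0" "qc \<ge> 0" "qd \<ge> 0"
    and a0: "a 0 \<ge> 0" and b0: "b 0 \<ge> 0"
  shows "\<forall>t\<ge>0. a t \<ge> 0 \<and> b t \<ge> 0"
proof (rule ccontr)
  assume neg: "\<not> (\<forall>t\<ge>0. a t \<ge> 0 \<and> b t \<ge> 0)"
  define F where "F = {t. t \<ge> 0 \<and> (a t < 0 \<or> b t < 0)}"
  have Fne: "F \<noteq> {}" using neg unfolding F_def by force
  have Fbdd: "bdd_below F" unfolding F_def by (rule bdd_belowI[of _ 0]) auto
  define t0 where "t0 = Inf F"
  have t0ge: "t0 \<ge> 0" unfolding t0_def using Fne by (rule cInf_greatest) (auto simp: F_def)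
  have notF: "a t \<ge> 0 \<and> b t \<ge> 0" if "0 \<le> t" "t < t0" for t
  proof -
    have "t \<notin> F" using cInf_lower[OF _ Fbdd, of t] that unfolding t0_def by force
    thus ?thesis using that unfolding F_def by auto
  qed
  have cona: "continuous_on {0..} a"
    by (rule has_derivative_continuous_on) (use da in \<open>auto simp: has_field_derivative_def\<close>)
  have conb: "continuous_on {0..} b"
    by (rule has_derivative_continuous_on) (use db in \<open>auto simp: has_field_derivative_def\<close>)
  have lb: "f t0 \<ge> 0" if cf: "continuous_on {0..} f" and nf: "\<And>t. 0 \<le> t \<Longrightarrow> t < t0 \<Longrightarrow> f t \<ge> 0"
    and f0: "f 0 \<ge> 0" for f :: "real \<Rightarrow> real"
  proof (cases "t0 = 0")
    case True thus ?thesis using f0 by simp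
  next
    case False
    hence pos: "t0 > 0" using t0ge by simp
    have "isCont f t0"
    proof -
      have "continuous_on {0<..} f" by (rule continuous_on_subset[OF cf]) auto
      thus ?thesis using pos by (simp add: continuous_on_eq_continuous_at)
    qed
    hence "(f \<longlongrightarrow> f t0) (at_left t0)"
      by (simp add: isCont_def filterlim_at_split)
    moreover have "eventually (\<lambda>t. 0 \<le> f t) (at_left t0)"
      using eventually_at_left_real[OF pos] by eventually_elim (use nf in auto)
    ultimately show ?thesis by (rule tendsto_lowerbound) simp
  qed
  have at0: "a t0 \<ge> 0" by (rule lb[OF cona]) (use notF a0 in auto)
  have bt0: "b t0 \<ge> 0" by (rule lb[OF conb]) (use notF b0 in auto)
  define c where "c = 1 + qa + qb + qc + qd"
  have cpos: "c > 0" using cn unfolding c_def by simp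
  define \<delta> where "\<delta> = 1 / (2 * c)"
  have dpos: "\<delta> > 0" using cpos unfolding \<delta>_def by simp
  obtain s where sF: "s \<in> F" and slt: "s < t0 + \<delta>"
    using cInf_less_iff[OF Fne Fbdd, of "t0 + \<delta>"] dpos unfolding t0_def by auto
  have sge: "s \<ge> t0" using cInf_lower[OF sF Fbdd] unfolding t0_def .
  have conm: "continuous_on {t0..t0+\<delta>} (\<lambda>t. min (a t) (b t))"
    by (intro continuous_intros continuous_on_subset[OF cona] continuous_on_subset[OF conb])
      (use t0ge in auto)
  obtain \<xi> where \<xi>: "\<xi> \<in> {t0..t0+\<delta>}" and \<xi>min: "\<And>y. y \<in> {t0..t0+\<delta>} \<Longrightarrow> min (a \<xi>) (b \<xi>) \<le> min (a y) (b y)"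
    using continuous_attains_inf[OF compact_Icc _ conm] dpos by auto
  define m where "m = min (a \<xi>) (b \<xi>)"
  have mneg: "m < 0" using \<xi>min[of s] sge slt sF unfolding m_def F_def by auto
  have xigt: "\<xi> > t0" using \<xi> mneg at0 bt0 unfolding m_def by (cases "\<xi> = t0") auto
  have mb: "a y \<ge> m \<and> b y \<ge> m" if "t0 \<le> y" "y \<le> \<xi>" for y
    using \<xi>min[of y] that \<xi> unfolding m_def by auto
  have key: "f \<xi> \<ge> m / 2" if df: "\<And>t. t \<ge> 0 \<Longrightarrow> (f has_real_derivative f' t) (at t within {0..})"
     and fi: "\<And>t. t \<ge> 0 \<Longrightarrow> f' t \<ge> d1 * a t + d2 * b t"
     and d: "d1 \<ge> 0" "d2 \<ge> 0" "d1 + d2 \<le> c" and ft0: "f t0 \<ge> 0"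
   for f f' :: "real \<Rightarrow> real" and d1 d2
  proof -
    have "\<exists>x\<in>{t0<..<\<xi>}. f \<xi> - f t0 = (\<lambda>t h. f' t * h) x (\<xi> - t0)"
    proof (rule mvt_simple[OF xigt])
      fix x assume "t0 \<le> x" "x \<le> \<xi>"
      hence "(f has_derivative (*) (f' x)) (at x within {0..})"
        using df[of x] t0ge by (simp add: has_field_derivative_def)
      thus "(f has_derivative (\<lambda>h. f' x * h)) (at x within {t0..\<xi>})"
        by (rule has_derivative_subset) (use t0ge in auto)
    qed
    then obtain \<eta> where \<eta>: "\<eta> \<in> {t0<..<\<xi>}" and eq: "f \<xi> - f t0 = f' \<eta> * (\<xi> - t0)" by auto
    have "d1 * a \<eta> \<ge> d1 * m" using mb[of \<eta>] \<eta> d by (auto intro: mult_left_mono)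
    moreover have "d2 * b \<eta> \<ge> d2 * m" using mb[of \<eta>] \<eta> d by (auto intro: mult_left_mono)
    ultimately have "f' \<eta> \<ge> (d1 + d2) * m" using fi[of \<eta>] \<eta> t0ge by (auto simp: algebra_simps)
    moreover have "(d1 + d2) * m \<ge> c * m" using d mneg by (auto intro: mult_right_mono_neg)
    ultimately have f1: "f' \<eta> \<ge> c * m" by linarith
    have "f' \<eta> * (\<xi> - t0) \<ge> c * m * (\<xi> - t0)" using f1 xigt by (auto intro: mult_right_mono)
    moreover have "c * m * (\<xi> - t0) \<ge> c * m * \<delta>"
      using \<xi> mneg cpos by (intro mult_left_mono_neg) (auto simp: mult_pos_neg mult_nonneg_nonpos)
    moreover have "c * m * \<delta> = m / 2" unfolding \<delta>_def using cpos by simp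
    ultimately show ?thesis using eq ft0 by linarith
  qed
  have qa2: "qa + qb \<le> c" and qc4: "qc + qd \<le> c" unfolding c_def using cn by auto
  have "a \<xi> \<ge> m / 2" by (rule key[OF da ia cn(1) cn(2) qa2 at0])
  moreover have "b \<xi> \<ge> m / 2" by (rule key[OF db ib cn(3) cn(4) qc4 bt0])
  ultimately have "m \<ge> m / 2" unfolding m_def by simp
  thus False using mneg by simp
qed
theorem theorem4:
  fixes p \<gamma> :: "real \<Rightarrow> real"
    and A B C \<kappa> vmax Dst Dsf Tc vbar :: real
    and D v vL aL :: "real \<Rightarrow> real"
  assumes p_lip: "locally_lipschitz p" and p_nonneg: "\<And>s. p s \<ge> 0"
    and gains: "A \<ge> 0" "B \<ge> 0" "C \<ge> 0"
    and cst: "\<kappa> > 0" "vmax > 0" "Tc > 0"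
    and dD: "\<And>t. t \<ge> 0 \<Longrightarrow> (D has_real_derivative (vL t - v t)) (at t within {0..})"
    and dv: "\<And>t. t \<ge> 0 \<Longrightarrow> (v has_real_derivative
               (kd A B C \<kappa> Dst vmax (D t) (v t) (vL t) (aL t) - p (v t))) (at t within {0..})"
    and dvL: "\<And>t. t \<ge> 0 \<Longrightarrow> (vL has_real_derivative aL t) (at t within {0..})"
    and gK: "class_K \<gamma>"
    and aL_bound: "\<And>t. t \<ge> 0 \<Longrightarrow> aL t \<ge> - \<gamma> (vL t)"
    and vbar: "vbar \<ge> 0"
    and v_bd: "\<And>t. t \<ge> 0 \<Longrightarrow> v t \<in> {0..vbar}"
    and vL_bd: "\<And>t. t \<ge> 0 \<Longrightarrow> vL t \<in> {0..vbar}"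
    and Dst_gt: "Dst > Dsf" and kbar_ge: "1 / Tc \<ge> \<kappa>" and C_le: "C \<le> 1"
    and gain_cond: "A * \<kappa> * (Dst - Dsf) + min 0 (B - 1 / Tc) * vbar
        + (INF w\<in>{0..vbar}. (1 / Tc - B + A) * w - (1 - C) * \<gamma> w) \<ge> 0"
    and init: "S_D Dsf (D 0, v 0, vL 0)" "S_TTC (1 / Tc) Dsf (D 0, v 0, vL 0)"
  shows "\<forall>t\<ge>0. S_D Dsf (D t, v t, vL t) \<and> S_TTC (1 / Tc) Dsf (D t, v t, vL t)"
proof -
  define kb where "kb = 1 / Tc"
  have kbpos: "kb > 0" using cst unfolding kb_def by simp
  define lam where "lam = kb + A"
  define fw where "fw = (\<lambda>w. (kb - B + A) * w - (1 - C) * \<gamma> w)"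
  define I where "I = (INF w\<in>{0..vbar}. fw w)"
  have gc: "A * \<kappa> * (Dst - Dsf) + min 0 (B - kb) * vbar + I \<ge> 0"
    using gain_cond unfolding I_def fw_def kb_def .
  have gcont: "continuous_on {0..vbar} \<gamma>"
    using gK unfolding class_K_def by (auto intro: continuous_on_subset)
  have fcont: "continuous_on {0..vbar} fw" unfolding fw_def
    by (intro continuous_intros gcont)
  have bdd: "bdd_below (fw ` {0..vbar})"
    by (rule bounded_imp_bdd_below, rule compact_imp_bounded,
        rule compact_continuous_image[OF fcont compact_Icc])
  have Ile: "I \<le> fw w" if "w \<in> {0..vbar}" for w
    unfolding I_def by (rule cINF_lower[OF bdd that])
  define h1 where "h1 = (\<lambda>t. D t - Dsf)"
  define h2 where "h2 = (\<lambda>t. kb * (D t - Dsf) + vL t - v t)"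
  define X where "X = (\<lambda>t. kb * (vL t - v t) + aL t - (kd A B C \<kappa> Dst vmax (D t) (v t) (vL t) (aL t) - p (v t)))"
  have keyX: "X t \<ge> A * (kb - \<kappa>) * h1 t - A * h2 t" if t: "t \<ge> 0" for t
  proof -
    have V: "A * Vfun \<kappa> Dst vmax (D t) \<le> A * (\<kappa> * (D t - Dst))"
      using gains unfolding Vfun_def by (intro mult_left_mono) auto
    have W: "B * Wfun vmax (vL t) \<le> B * vL t"
      using gains unfolding Wfun_def by (intro mult_left_mono) auto
    have aLb: "(1 - C) * aL t \<ge> (1 - C) * (- \<gamma> (vL t))"
      using C_le aL_bound[OF t] by (intro mult_left_mono) auto
    have Bv: "(B - kb) * v t \<ge> min 0 (B - kb) * vbar"
      using v_bd[OF t] vbar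
      by (cases "B \<ge> kb") (auto intro: mult_nonneg_nonneg mult_left_mono_neg simp: min_def)
    have fI: "I \<le> (kb - B + A) * vL t - (1 - C) * \<gamma> (vL t)"
      using Ile[OF vL_bd[OF t]] unfolding fw_def .
    have pp: "p (v t) \<ge> 0" by (rule p_nonneg)
    show ?thesis
      using V W aLb Bv fI pp gc unfolding X_def h1_def h2_def kd_def
      by (simp add: algebra_simps)
  qed
  define a where "a = (\<lambda>t. h1 t * exp (lam * t))"
  define b where "b = (\<lambda>t. h2 t * exp (lam * t))"
  have da: "(a has_real_derivative ((vL t - v t) * exp (lam * t) + h1 t * (exp (lam * t) * lam)))
      (at t within {0..})" if "t \<ge> 0" for t
    unfolding a_def h1_def
    by (auto intro!: derivative_eq_intros dD that)
  have db: "(b has_real_derivative ((kb * (vL t - v t) + aL t - (kd A B C \<kappa> Dst vmax (D t) (v t) (vL t) (aL t) - p (v t))) * exp (lam * t) + h2 t * (exp (lam * t) * lam)))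
      (at t within {0..})" if "t \<ge> 0" for t
    unfolding b_def h2_def
    by (auto intro!: derivative_eq_intros dD dv dvL that)
  have res: "\<forall>t\<ge>0. a t \<ge> 0 \<and> b t \<ge> 0"
  proof (rule coop[where qa = A and qb = 1 and qc = "A * (kb - \<kappa>)" and qd = kb, OF da db])
    fix t :: real assume t: "t \<ge> 0"
    show "A * a t + 1 * b t \<le> (vL t - v t) * exp (lam * t) + h1 t * (exp (lam * t) * lam)"
      unfolding a_def b_def h1_def h2_def lam_def by (simp add: algebra_simps)
    have e: "exp (lam * t) > 0" by simp
    have "(A * (kb - \<kappa>) * h1 t - A * h2 t) * exp (lam * t) \<le> X t * exp (lam * t)"
      using keyX[OF t] e by (intro mult_right_mono) auto
    thus "A * (kb - \<kappa>) * a t + kb * b t \<le> (kb * (vL t - v t) + aL t - (kd A B C \<kappa> Dst vmax (D t) (v t) (vL t) (aL t) - p (v t))) * exp (lam * t) + h2 t * (exp (lam * t) * lam)"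
      unfolding a_def b_def lam_def X_def by (simp add: algebra_simps)
  next
    show "A \<ge> 0" using gains by simp
    show "(0::real) \<le> 1" by simp
    show "0 \<le> A * (kb - \<kappa>)" using gains kbar_ge unfolding kb_def by simp
    show "0 \<le> kb" using kbpos by simp
    show "0 \<le> a 0" using init unfolding a_def h1_def S_D_def by simp
    show "0 \<le> b 0" using init unfolding b_def h2_def S_TTC_def kb_def by simp
  qed
  show ?thesis
  proof (intro allI impI)
    fix t :: real assume "t \<ge> 0"
    hence "a t \<ge> 0" "b t \<ge> 0" using res by auto
    hence "h1 t \<ge> 0" "h2 t \<ge> 0" unfolding a_def b_def by (simp_all add: zero_le_mult_iff)
    thus "S_D Dsf (D t, v t, vL t) \<and> S_TTC (1 / Tc) Dsf (D t, v t, vL t)"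
      unfolding h1_def h2_def S_D_def S_TTC_def kb_def by simp
  qed
qed

end
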